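(* Let $n\ge 2$ and consider \textsc{OneMinMax}. Let $\mathrm{score}(x,P)$ be any diversity measure that is diversity-favouring on $\{0,1\}^n\setminus\{0^n,1^n\}$ with respect to \textsc{OneMinMax} (for example the hypervolume contribution with a reference point $(r_1,r_2)$ satisfying $r_1\le -1$, $r_2\le -1$, or the crowding distance contribution). Consider SEMO and GSEMO with diversity-based parent selection using this measure. Then the expected time to find the whole Pareto front of \textsc{OneMinMax} is $O(n\log n)$ when the parent selection mechanism is the exponential ranking scheme, the power law ranking scheme, or tournament selection with tournament size $\mu$; and it is $O(n\log^2 n)$ when the parent selection mechanism is the harmonic ranking scheme.
   Context: Search space $\{0,1\}^n$; both objectives are maximised. $\textsc{OneMinMax}(x)=(\sum_i x_i,\, n-\sum_i x_i)$. A point $y$ dominates $x$ if $f_i(y)\ge f_i(x)$ for all $i$ with strict inequality for some $i$; $y$ weakly dominates $x$ if $f_i(y)\ge f_i(x)$ for all $i$. The Pareto set $X^*$ is the set of non-dominated points and the Pareto front is $F^*=f(X^* )$; for \textsc{OneMinMax} every point is Pareto optimal. SEMO/GSEMO with diversity-based parent selection: choose $s\in\{0,1\}^n$ uniformly at random and set $P=\{s\}$. In each iteration: compute $\mathrm{score}(x,P)$ for every $x\in P$; choose a parent $s\in P$ according to the parent selection mechanism; create $s'$ by flipping one uniformly random bit of $s$ (SEMO) or by flipping each bit independently with probability $1/n$ (GSEMO); if $s'$ is not dominated by any member of $P$, add $s'$ to $P$ and remove all members of $P$ weakly dominated by $s'$. Let $\mu=|P|$. The time is the number of iterations (fitness evaluations)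 until $f(P)=F^*$. Good individuals: w.r.t. population $P$, a point $x\in P\cap X^*$ is good if it has a Hamming neighbour $y$ (Hamming distance 1) with $y\in X^*$ and $f(y)\notin f(P)$; otherwise bad. A measure $\mathrm{score}(x,P)$ is diversity-favouring on $S\subseteq\{0,1\}^n$ (w.r.t. $f$) if for every population $P$ and all $x,y\in P\cap X^*\cap S$ with $x$ bad and $y$ good, $\mathrm{score}(x,P)<\mathrm{score}(y,P)$. Hypervolume contribution (HVC) with reference point $(r_1,r_2)$: sort the (mutually non-dominated) population by increasing $f_1$ as $x_1,\dots,x_\mu$, set $f_1(x_0)=r_1$, $f_2(x_{\mu+1})=r_2$, and $\mathrm{HVC}(x_i,P)=(f_1(x_i)-f_1(x_{i-1}))(f_2(x_i)-f_2(x_{i+1}))$. Crowding distance contribution (CDC): all points start at 0; for each objective $m$, sort $P$ ascending by $f_m$, give the first and last points distance $\infty$, and add to each intermediate point $P[i]$ the value $(f_m(P[i+1])-f_m(P[i-1]))/(f_m^{\max}-f_m^{\min})$ where $f_m^{\max},f_m^{\min}$ are the maximum and minimum values of the $m$-th objective. Parent selection mechanisms: sort $P$ by non-increasing score; the $i$-th ranked individual is selected with probability $2^{-i}/\sum_{j=1}^\mu 2^{-j}$ (exponential), $i^{-2}/\sum_{j=1}^\mu j^{-2}$ (power law), or $i^{-1}/\sum_{j=1}^\mu j^{-1}$ (harmonic). Tournament selection with tournament size $\mu$: draw $\mu$ individuals uniformly at random with replacement from $P$ and select the one with highest score. *)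

theory Defs
  imports "HOL-Probability.Probability"
begin

type_synonym bits = "bool list"
type_synonym pop = "bool list set"

definition cube :: "nat \<Rightarrow> bits set" where
  "cube n = {x. length x = n}"

definition ones :: "bits \<Rightarrow> nat" where
  "ones x = count_list x True"

definition OneMinMax :: "nat \<Rightarrow> bits \<Rightarrow> int \<times> int" where
  "OneMinMax n x = (int (ones x), int n - int (ones x))"

definition weakly_dominates :: "(bits \<Rightarrow> int \<times> int) \<Rightarrow> bits \<Rightarrow> bits \<Rightarrow> bool" where
  "weakly_dominates f y x \<longleftrightarrow> fst (f y) \<ge> fst (f x) \<and> snd (f y) \<ge> snd (f x)"

definition dominates :: "(bits \<Rightarrow> int \<times> int) \<Rightarrow> bits \<Rightarrow> bits \<Rightarrow> bool" where
  "dominates f y x \<longleftrightarrow> weakly_dominates f y x \<and> (fst (f y) > fst (f x) \<or> snd (f y) > snd (f x))"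

definition pareto_set :: "nat \<Rightarrow> (bits \<Rightarrow> int \<times> int) \<Rightarrow> bits set" where
  "pareto_set n f = {x \<in> cube n. \<not> (\<exists>y \<in> cube n. dominates f y x)}"

definition pareto_front :: "nat \<Rightarrow> (bits \<Rightarrow> int \<times> int) \<Rightarrow> (int \<times> int) set" where
  "pareto_front n f = f ` pareto_set n f"

definition hamming :: "bits \<Rightarrow> bits \<Rightarrow> nat" where
  "hamming x y = card {i. i < length x \<and> x ! i \<noteq> y ! i}"

text \<open>A population: a nonempty set of length-n bit strings in which no member weakly
  dominates another member (the invariant maintained by (G)SEMO).\<close>
definition population :: "nat \<Rightarrow> (bits \<Rightarrow> int \<times> int) \<Rightarrow> pop \<Rightarrow> bool" where
  "population n f P \<longleftrightarrow> P \<noteq> {} \<and> P \<subseteq> cube n \<and>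
     (\<forall>x\<in>P. \<forall>y\<in>P. x \<noteq> y \<longrightarrow> \<not> weakly_dominates f x y)"

definition good :: "nat \<Rightarrow> (bits \<Rightarrow> int \<times> int) \<Rightarrow> pop \<Rightarrow> bits \<Rightarrow> bool" where
  "good n f P x \<longleftrightarrow> x \<in> P \<inter> pareto_set n f \<and>
     (\<exists>y. length y = length x \<and> hamming x y = 1 \<and> y \<in> pareto_set n f \<and> f y \<notin> f ` P)"

definition bad :: "nat \<Rightarrow> (bits \<Rightarrow> int \<times> int) \<Rightarrow> pop \<Rightarrow> bits \<Rightarrow> bool" where
  "bad n f P x \<longleftrightarrow> x \<in> P \<inter> pareto_set n f \<and> \<not> good n f P x"

text \<open>score P x stands for score(x,P).  Values in ereal so that e.g. the crowding
  distance (which takes the value infinity) is covered.\<close>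
definition diversity_favouring ::
  "nat \<Rightarrow> (bits \<Rightarrow> int \<times> int) \<Rightarrow> bits set \<Rightarrow> (pop \<Rightarrow> bits \<Rightarrow> ereal) \<Rightarrow> bool" where
  "diversity_favouring n f S score \<longleftrightarrow>
     (\<forall>P. population n f P \<longrightarrow>
        (\<forall>x y. x \<in> P \<inter> pareto_set n f \<inter> S \<longrightarrow> y \<in> P \<inter> pareto_set n f \<inter> S \<longrightarrow>
               bad n f P x \<longrightarrow> good n f P y \<longrightarrow> score P x < score P y))"

definition is_score_ranking :: "(pop \<Rightarrow> bits \<Rightarrow> ereal) \<Rightarrow> (pop \<Rightarrow> bits list) \<Rightarrow> bool" where
  "is_score_ranking score rk \<longleftrightarrow>
     (\<forall>P. finite P \<longrightarrow> distinct (rk P) \<and> set (rk P) = P \<and>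
        sorted_wrt (\<lambda>x y. score P x \<ge> score P y) (rk P))"

datatype mutation = SEMO | GSEMO
datatype selection = Exponential | PowerLaw | Harmonic | Tournament

definition flip_bit :: "nat \<Rightarrow> bits \<Rightarrow> bits" where
  "flip_bit i x = x[i := \<not> x ! i]"

fun bitwise_mutation :: "real \<Rightarrow> bits \<Rightarrow> bits pmf" where
  "bitwise_mutation p [] = return_pmf []"
| "bitwise_mutation p (b # bs) =
     bind_pmf (bernoulli_pmf p) (\<lambda>c. map_pmf (\<lambda>r. (if c then \<not> b else b) # r) (bitwise_mutation p bs))"

definition mutate :: "mutation \<Rightarrow> nat \<Rightarrow> bits \<Rightarrow> bits pmf" where
  "mutate m n x = (case m of
      SEMO \<Rightarrow> map_pmf (\<lambda>i. flip_bit i x) (pmf_of_set {..<n})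
    | GSEMO \<Rightarrow> bitwise_mutation (1 / real n) x)"

definition rank_weight :: "selection \<Rightarrow> nat \<Rightarrow> real" where
  "rank_weight s i = (case s of
      Exponential \<Rightarrow> (1/2) ^ i
    | PowerLaw \<Rightarrow> 1 / (real i)^2
    | Harmonic \<Rightarrow> 1 / real i
    | Tournament \<Rightarrow> 0)"

text \<open>Distribution of the 0-based index (rank - 1) of the selected individual.\<close>
definition ranking_pmf :: "(nat \<Rightarrow> real) \<Rightarrow> nat \<Rightarrow> nat pmf" where
  "ranking_pmf w \<mu> = embed_pmf (\<lambda>i. if i < \<mu> then w (Suc i) / (\<Sum>j=1..\<mu>. w j) else 0)"

text \<open>Minimum rank index among k uniform draws with replacement (sentinel \<mu> for k = 0).\<close>
fun min_of_draws :: "nat \<Rightarrow> nat \<Rightarrow> nat pmf" where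
  "min_of_draws 0 \<mu> = return_pmf \<mu>"
| "min_of_draws (Suc k) \<mu> =
     bind_pmf (pmf_of_set {..<\<mu>}) (\<lambda>a. map_pmf (min a) (min_of_draws k \<mu>))"

definition rank_index_pmf :: "selection \<Rightarrow> nat \<Rightarrow> nat pmf" where
  "rank_index_pmf s \<mu> = (case s of
      Tournament \<Rightarrow> min_of_draws \<mu> \<mu>
    | _ \<Rightarrow> ranking_pmf (rank_weight s) \<mu>)"

definition update :: "(bits \<Rightarrow> int \<times> int) \<Rightarrow> pop \<Rightarrow> bits \<Rightarrow> pop" where
  "update f P y = (if \<exists>z\<in>P. dominates f z y then P
                   else insert y {z \<in> P. \<not> weakly_dominates f y z})"

definition step ::
  "mutation \<Rightarrow> selection \<Rightarrow> nat \<Rightarrow> (bits \<Rightarrow> int \<times> int) \<Rightarrow> (pop \<Rightarrow> bits list) \<Rightarrow> pop \<Rightarrow> pop pmf" where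
  "step m s n f rk P =
     bind_pmf (map_pmf (\<lambda>i. rk P ! i) (rank_index_pmf s (card P)))
              (\<lambda>x. map_pmf (update f P) (mutate m n x))"

definition covers_front :: "nat \<Rightarrow> (bits \<Rightarrow> int \<times> int) \<Rightarrow> pop \<Rightarrow> bool" where
  "covers_front n f P \<longleftrightarrow> f ` P = pareto_front n f"

definition stopped_step ::
  "mutation \<Rightarrow> selection \<Rightarrow> nat \<Rightarrow> (bits \<Rightarrow> int \<times> int) \<Rightarrow> (pop \<Rightarrow> bits list) \<Rightarrow> pop \<Rightarrow> pop pmf" where
  "stopped_step m s n f rk P = (if covers_front n f P then return_pmf P else step m s n f rk P)"

definition init_pop :: "nat \<Rightarrow> pop pmf" where
  "init_pop n = map_pmf (\<lambda>x. {x}) (pmf_of_set (cube n))"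

definition pop_dist ::
  "mutation \<Rightarrow> selection \<Rightarrow> nat \<Rightarrow> (bits \<Rightarrow> int \<times> int) \<Rightarrow> (pop \<Rightarrow> bits list) \<Rightarrow> nat \<Rightarrow> pop pmf" where
  "pop_dist m s n f rk t = ((\<lambda>D. bind_pmf D (stopped_step m s n f rk)) ^^ t) (init_pop n)"

text \<open>E[T] = sum_{t>=0} Pr[T > t], T = number of iterations until f(P) = F*.\<close>
definition expected_time ::
  "mutation \<Rightarrow> selection \<Rightarrow> nat \<Rightarrow> (bits \<Rightarrow> int \<times> int) \<Rightarrow> (pop \<Rightarrow> bits list) \<Rightarrow> ennreal" where
  "expected_time m s n f rk =
     (\<Sum>t. ennreal (measure_pmf.prob (pop_dist m s n f rk t) {P. \<not> covers_front n f P}))"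

end

theory Submission
  imports Defs "HOL-Analysis.Harmonic_Numbers"
begin

lemma ones_card: "ones x = card {i. i < length x \<and> x ! i}"
  unfolding ones_def count_list_eq_length_filter length_filter_conv_card
  by (metis (full_types))

lemma ones_le: "ones x \<le> length x"
  unfolding ones_card by (rule order_trans[OF card_mono[of "{..<length x}"]]) auto

lemma flip_len[simp]: "length (flip_bit i x) = length x"
  by (simp add: flip_bit_def)

lemma ones_flip_T: "i < length x \<Longrightarrow> x ! i \<Longrightarrow> ones (flip_bit i x) + 1 = ones x"
proof -
  assume i: "i < length x" "x ! i"
  have "{l. l < length (flip_bit i x) \<and> flip_bit i x ! l} = {l. l < length x \<and> x ! l} - {i}"
    using i by (auto simp: flip_bit_def nth_list_update)
  moreover have "i \<in> {l. l < length x \<and> x ! l}" using i by auto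
  moreover have "finite {l. l < length x \<and> x ! l}" by simp
  ultimately show ?thesis unfolding ones_card
    using card_Suc_Diff1 by (metis Suc_eq_plus1)
qed

lemma ones_flip_F: "i < length x \<Longrightarrow> \<not> x ! i \<Longrightarrow> ones (flip_bit i x) = ones x + 1"
proof -
  assume i: "i < length x" "\<not> x ! i"
  have "{l. l < length (flip_bit i x) \<and> flip_bit i x ! l} = insert i {l. l < length x \<and> x ! l}"
    using i by (auto simp: flip_bit_def nth_list_update)
  moreover have "i \<notin> {l. l < length x \<and> x ! l}" using i by auto
  ultimately show ?thesis unfolding ones_card by simp
qed

lemma card_F: "card {i. i < length x \<and> \<not> x ! i} = length x - ones x"
proof -
  have e: "{i. i < length x \<and> \<not> x ! i} = {..<length x} - {i. i < length x \<and> x ! i}" by auto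
  have "card {i. i < length x \<and> \<not> x ! i} = card {..<length x} - card {i. i < length x \<and> x ! i}"
  proof -
    have "finite {i. i < length x \<and> x ! i}" "{i. i < length x \<and> x ! i} \<subseteq> {..<length x}" by auto
    from card_Diff_subset[OF this] show ?thesis unfolding e by simp
  qed
  then show ?thesis unfolding ones_card by simp
qed

lemma hamming_flip: "i < length x \<Longrightarrow> hamming x (flip_bit i x) = 1"
proof -
  assume i: "i < length x"
  have "{l. l < length x \<and> x ! l \<noteq> flip_bit i x ! l} = {i}"
    using i by (auto simp: flip_bit_def nth_list_update)
  then show ?thesis by (simp add: hamming_def)
qed

lemma hamming_one:
  assumes "length y = length x" "hamming x y = 1"
  shows "\<exists>i<length x. y = flip_bit i x"
proof -
  from assms(2) obtain i where i: "{l. l < length x \<and> x ! l \<noteq> y ! l} = {i}"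
    unfolding hamming_def by (auto simp: card_Suc_eq)
  then have "i < length x" "x ! i \<noteq> y ! i" by auto
  moreover have "y = flip_bit i x"
  proof (rule nth_equalityI)
    show "length y = length (flip_bit i x)" using assms by simp
    fix l assume "l < length y"
    then show "y ! l = flip_bit i x ! l"
      using i assms(1) by (cases "l = i") (auto simp: flip_bit_def nth_list_update)
  qed
  ultimately show ?thesis by blast
qed

lemma ones_flip_cases: "i < length x \<Longrightarrow> ones (flip_bit i x) + 1 = ones x \<or> ones (flip_bit i x) = ones x + 1"
  using ones_flip_T ones_flip_F by blast

lemma not_dom: "\<not> dominates (OneMinMax n) y x"
  by (auto simp: dominates_def weakly_dominates_def OneMinMax_def)

lemma wdom: "weakly_dominates (OneMinMax n) y x \<longleftrightarrow> ones y = ones x"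
  by (auto simp: weakly_dominates_def OneMinMax_def)

lemma pareto_cube: "pareto_set n (OneMinMax n) = cube n"
  by (auto simp: pareto_set_def not_dom)

lemma OMM_eq: "OneMinMax n x = OneMinMax n y \<longleftrightarrow> ones x = ones y"
  by (auto simp: OneMinMax_def)

lemma OMM_img: "OneMinMax n x \<in> OneMinMax n ` P \<longleftrightarrow> ones x \<in> ones ` P"
  by (auto simp: OMM_eq)

lemma update_eq: "update (OneMinMax n) P y = insert y {z \<in> P. ones z \<noteq> ones y}"
  by (simp add: update_def not_dom wdom eq_commute)

lemma ones_update: "ones ` update (OneMinMax n) P y = insert (ones y) (ones ` P)"
  unfolding update_eq by auto

lemma count_rep: "count_list (replicate k a) a = k" by (induct k) auto

lemma cube_ones: "ones ` cube n = {0..n}"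
proof
  show "ones ` cube n \<subseteq> {0..n}" using ones_le by (auto simp: cube_def)
  show "{0..n} \<subseteq> ones ` cube n"
  proof
    fix k assume "k \<in> {0..n}"
    then have k: "k \<le> n" by simp
    let ?x = "replicate k True @ replicate (n - k) False"
    have "ones ?x = k" by (simp add: ones_def count_rep)
    moreover have "?x \<in> cube n" using k by (simp add: cube_def)
    ultimately show "k \<in> ones ` cube n" by force
  qed
qed

lemma covers_iff: "P \<subseteq> cube n \<Longrightarrow> covers_front n (OneMinMax n) P \<longleftrightarrow> ones ` P = {0..n}"
proof -
  assume P: "P \<subseteq> cube n"
  have "covers_front n (OneMinMax n) P \<longleftrightarrow> OneMinMax n ` P = OneMinMax n ` cube n"
    by (simp add: covers_front_def pareto_front_def pareto_cube)
  also have "\<dots> \<longleftrightarrow> ones ` P = ones ` cube n"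
  proof -
    let ?g = "\<lambda>k::nat. (int k, int n - int k)"
    have e: "\<And>A. OneMinMax n ` A = ?g ` (ones ` A)" by (auto simp: OneMinMax_def image_image)
    have "inj ?g" by (auto simp: inj_def)
    then show ?thesis unfolding e by (simp add: inj_image_eq_iff)
  qed
  also have "\<dots> \<longleftrightarrow> ones ` P = {0..n}" by (simp only: cube_ones)
  finally show ?thesis .
qed

lemma pmf_map_Cons: "pmf (map_pmf (\<lambda>r. v # r) M) (c # ys) = (if v = c then pmf M ys else 0)"
proof (cases "v = c")
  case True
  have "inj (Cons v)" by (auto simp: inj_def)
  from pmf_map_inj'[OF this, of M ys] True show ?thesis by simp
next
  case False
  then show ?thesis by (intro trans[OF pmf_map_outside]) auto
qed

lemma pmf_map_Cons_Nil: "pmf (map_pmf (\<lambda>r. v # r) M) [] = 0"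
  by (intro pmf_map_outside) auto

lemma bw_pmf:
  assumes p: "0 \<le> p" "p \<le> 1"
  shows "pmf (bitwise_mutation p x) y =
    (if length y = length x then prod_list (map2 (\<lambda>a b. if a = b then 1 - p else p) x y) else 0)"
proof (induction x arbitrary: y)
  case Nil
  then show ?case by (auto simp: indicator_def)
next
  case (Cons b bs)
  show ?case
  proof (cases y)
    case Nil
    then show ?thesis using p by (simp add: pmf_bind pmf_map_Cons_Nil)
  next
    case (Cons c ys)
    have "pmf (bitwise_mutation p (b # bs)) y =
      pmf (map_pmf (\<lambda>r. (\<not> b) # r) (bitwise_mutation p bs)) (c # ys) * p
      + pmf (map_pmf (\<lambda>r. b # r) (bitwise_mutation p bs)) (c # ys) * (1 - p)"
      using p Cons by (simp add: pmf_bind)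
    also have "\<dots> = (if c = b then 1 - p else p) * pmf (bitwise_mutation p bs) ys"
      unfolding pmf_map_Cons by auto
    finally show ?thesis using Cons Cons.IH[of ys] by simp
  qed
qed

lemma prod_same: "prod_list (map2 (\<lambda>a b. if a = b then 1 - p else p) x x) = (1 - p) ^ length x"
  by (induct x) auto

lemma prod_flip: "i < length x \<Longrightarrow>
  prod_list (map2 (\<lambda>a b. if a = b then 1 - p else (p::real)) x (flip_bit i x)) = p * (1 - p) ^ (length x - 1)"
proof (induction x arbitrary: i)
  case Nil then show ?case by simp
next
  case (Cons a xs)
  show ?case
  proof (cases i)
    case 0
    then show ?thesis by (simp add: flip_bit_def prod_same)
  next
    case (Suc i')
    then have "i' < length xs" using Cons by simp
    have "flip_bit i (a # xs) = a # flip_bit i' xs" using Suc by (simp add: flip_bit_def)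
    then have "prod_list (map2 (\<lambda>a b. if a = b then 1 - p else (p::real)) (a # xs) (flip_bit i (a # xs)))
       = (1 - p) * (p * (1 - p) ^ (length xs - 1))" using Cons.IH[OF \<open>i' < length xs\<close>] by simp
    also have "\<dots> = p * (1 - p) ^ (length (a # xs) - 1)" using \<open>i' < length xs\<close>
      by (cases "length xs") auto
    finally show ?thesis .
  qed
qed

lemma flip_inj: "i < length x \<Longrightarrow> i' < length x \<Longrightarrow> flip_bit i x = flip_bit i' x \<Longrightarrow> i = i'"
  by (metis flip_bit_def length_list_update nth_list_update_eq nth_list_update_neq)

lemma one_minus_pow: "n \<ge> 1 \<Longrightarrow> (1 - 1 / real n) ^ (n - 1) \<ge> exp (-1)"
proof -
  assume n: "n \<ge> 1"
  show ?thesis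
  proof (cases "n = 1")
    case True then show ?thesis by simp
  next
    case False
    then have n2: "n \<ge> 2" using n by simp
    define m where "m = n - 1"
    have m: "m \<ge> 1" "real n = real m + 1" using n2 by (auto simp: m_def)
    have "(1 + 1 / real m) ^ m \<le> exp (1 / real m) ^ m"
      by (intro power_mono) (use exp_ge_add_one_self in auto)
    also have "\<dots> = exp 1" using m by (simp add: exp_of_nat_mult[symmetric])
    finally have A: "(1 + 1 / real m) ^ m \<le> exp 1" .
    have "1 - 1 / real n = 1 / (1 + 1 / real m)" using m by (simp add: field_simps)
    then have "(1 - 1 / real n) ^ (n - 1) = 1 / (1 + 1 / real m) ^ m" by (simp add: m_def power_divide)
    also have "\<dots> \<ge> 1 / exp 1" using A m by (intro divide_left_mono) (auto intro!: mult_pos_pos zero_less_power add_pos_nonneg)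
    finally show ?thesis by (simp add: exp_minus field_simps)
  qed
qed

definition dd :: "nat \<Rightarrow> nat \<Rightarrow> nat" where "dd n j = min (j + 1) (n + 1 - j)"

lemma count_T: "ones x = card {i. i < length x \<and> x ! i}" by (rule ones_card)

lemma target_set:
  assumes x: "length x = n" and j: "j + 1 = ones x \<or> j = ones x + 1" "j \<le> n"
  obtains I where "I \<subseteq> {..<n}" "card I \<ge> dd n j" "\<And>i. i \<in> I \<Longrightarrow> ones (flip_bit i x) = j"
proof -
  show ?thesis
  proof (cases "j + 1 = ones x")
    case True
    let ?I = "{i. i < length x \<and> x ! i}"
    have "card ?I \<ge> dd n j" using True by (simp add: dd_def ones_card[symmetric])
    moreover have "\<And>i. i \<in> ?I \<Longrightarrow> ones (flip_bit i x) = j" using True ones_flip_T by force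
    ultimately show ?thesis using that[of ?I] x by auto
  next
    case False
    then have jj: "j = ones x + 1" using j by auto
    let ?I = "{i. i < length x \<and> \<not> x ! i}"
    have "card ?I = n - ones x" using card_F[of x] x by simp
    then have "card ?I \<ge> dd n j" using jj by (simp add: dd_def)
    moreover have "\<And>i. i \<in> ?I \<Longrightarrow> ones (flip_bit i x) = j" using jj ones_flip_F by force
    ultimately show ?thesis using that[of ?I] x by auto
  qed
qed

lemma mutate_hit:
  assumes n: "n \<ge> 1" and x: "length x = n" and j: "j + 1 = ones x \<or> j = ones x + 1" "j \<le> n"
  shows "measure_pmf.prob (mutate m n x) {z. ones z = j} \<ge> real (dd n j) / (exp 1 * real n)"
proof -
  obtain I where I: "I \<subseteq> {..<n}" "card I \<ge> dd n j" "\<And>i. i \<in> I \<Longrightarrow> ones (flip_bit i x) = j"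
    using target_set[OF x j] by blast
  have finI: "finite I" using I(1) finite_subset by blast
  show ?thesis
  proof (cases m)
    case SEMO
    have "measure_pmf.prob (mutate m n x) {z. ones z = j} =
        real (card ({..<n} \<inter> {i. ones (flip_bit i x) = j})) / real n"
      using n SEMO by (simp add: mutate_def vimage_def, subst measure_pmf_of_set) (auto simp: lessThan_empty_iff)
    also have "\<dots> \<ge> real (card I) / real n"
      using I n by (intro divide_right_mono of_nat_mono card_mono) auto
    finally have "measure_pmf.prob (mutate m n x) {z. ones z = j} \<ge> real (dd n j) / real n"
      using I(2) n by (smt (verit, ccfv_SIG) divide_right_mono of_nat_0_le_iff of_nat_mono)
    moreover have "real (dd n j) / real n \<ge> real (dd n j) / (exp 1 * real n)"
      using n by (intro divide_left_mono) (auto simp: mult_le_cancel_right1 intro!: mult_pos_pos)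
    ultimately show ?thesis by linarith
  next
    case GSEMO
    define p where "p = 1 / real n"
    have p: "0 \<le> p" "p \<le> 1" using n by (auto simp: p_def)
    let ?M = "bitwise_mutation p x"
    have "measure_pmf.prob ?M {z. ones z = j} \<ge> measure_pmf.prob ?M ((\<lambda>i. flip_bit i x) ` I)"
      using I(3) by (intro measure_pmf.finite_measure_mono) auto
    also have "measure_pmf.prob ?M ((\<lambda>i. flip_bit i x) ` I) = sum (pmf ?M) ((\<lambda>i. flip_bit i x) ` I)"
      using finI by (intro measure_measure_pmf_finite) auto
    also have "\<dots> = (\<Sum>i\<in>I. pmf ?M (flip_bit i x))"
      using I(1) x flip_inj[of _ x] by (intro sum.reindex_cong[of "\<lambda>i. flip_bit i x"]) (auto simp: inj_on_def subset_iff)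
    also have "\<dots> = (\<Sum>i\<in>I. p * (1 - p) ^ (n - 1))"
      using I(1) x by (intro sum.cong) (auto simp: bw_pmf[OF p] prod_flip)
    also have "\<dots> = real (card I) * (p * (1 - p) ^ (n - 1))" by simp
    finally have A: "measure_pmf.prob ?M {z. ones z = j} \<ge> real (card I) * (p * (1 - p) ^ (n - 1))" .
    have "(1 - p) ^ (n - 1) \<ge> exp (-1)" using one_minus_pow[OF n] by (simp add: p_def)
    then have "real (dd n j) * (p * exp (-1)) \<le> real (card I) * (p * (1 - p) ^ (n - 1))"
      using I(2) p by (intro mult_mono) auto
    moreover have "real (dd n j) * (p * exp (-1)) = real (dd n j) / (exp 1 * real n)"
      by (simp add: p_def exp_minus field_simps)
    ultimately show ?thesis using A GSEMO by (simp add: mutate_def p_def)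
  qed
qed

lemma sum_shift1: "(\<Sum>j=1..\<mu>. w j) = (\<Sum>k<\<mu>. w (Suc k))"
  using sum.atLeast1_atMost_eq[of w \<mu>] by simp

lemma sum_shift1': "(\<Sum>j=Suc 0..\<mu>. w j) = (\<Sum>k<\<mu>. w (Suc k))"
  using sum.atLeast1_atMost_eq[of w \<mu>] by simp

lemma pmf_ranking:
  assumes nn: "\<And>j. 0 \<le> w j" and pos: "0 < (\<Sum>j=1..\<mu>. w j)"
  shows "pmf (ranking_pmf w \<mu>) i = (if i < \<mu> then w (Suc i) / (\<Sum>j=1..\<mu>. w j) else 0)"
proof -
  define S where "S = (\<Sum>j=1..\<mu>. w j)"
  define f where "f = (\<lambda>i. if i < \<mu> then w (Suc i) / S else 0)"
  have f_nn: "\<And>i. 0 \<le> f i" using nn pos by (simp add: f_def S_def)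
  have "(\<integral>\<^sup>+x. ennreal (f x) \<partial>count_space UNIV) = (\<Sum>x\<in>{..<\<mu>}. ennreal (f x))"
    by (intro nn_integral_count_space') (auto simp: f_def)
  also have "\<dots> = ennreal (\<Sum>x\<in>{..<\<mu>}. f x)" using f_nn by (simp add: sum_ennreal)
  also have "(\<Sum>x\<in>{..<\<mu>}. f x) = (\<Sum>x\<in>{..<\<mu>}. w (Suc x)) / S"
    by (simp add: f_def sum_divide_distrib)
  also have "\<dots> = 1" using pos unfolding S_def sum_shift1 by simp
  finally have prob: "(\<integral>\<^sup>+x. ennreal (f x) \<partial>count_space UNIV) = 1" by simp
  show ?thesis
    unfolding ranking_pmf_def f_def[symmetric] S_def[symmetric]
    by (subst pmf_embed_pmf[OF f_nn prob]) (simp add: f_def)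
qed

lemma sum_exp_w: "(\<Sum>k<\<mu>. (1/2::real) ^ Suc k) = 1 - (1/2) ^ \<mu>"
  by (induct \<mu>) (auto simp: field_simps)

lemma sum_exp_w': "(\<Sum>k<\<mu>. (1/2::real) ^ k / 2) = 1 - (1/2) ^ \<mu>"
  by (induct \<mu>) (auto simp: field_simps)

lemma sum_sq_w: "\<mu> \<ge> 1 \<Longrightarrow> (\<Sum>k<\<mu>. 1 / (real (Suc k))^2) \<le> 2 - 1 / real \<mu>"
proof (induction \<mu>)
  case 0 then show ?case by simp
next
  case (Suc m)
  show ?case
  proof (cases "m = 0")
    case True then show ?thesis by simp
  next
    case False
    then have IH: "(\<Sum>k<m. 1 / (real (Suc k))^2) \<le> 2 - 1 / real m" using Suc by simp
    have m: "real m \<ge> 1" using False by simp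
    have "1 / (real (Suc m))^2 \<le> 1 / real m - 1 / real (Suc m)"
    proof -
      have e: "1 / real m - 1 / real (Suc m) = 1 / (real m * (real m + 1))" using m by (simp add: field_simps)
      have "real m * (real m + 1) \<le> (real m + 1)^2" by (simp add: power2_eq_square)
      then have "1 / (real m + 1)^2 \<le> 1 / (real m * (real m + 1))" using m
        by (intro divide_left_mono) (auto intro!: mult_pos_pos)
      then show ?thesis unfolding e by (simp add: add.commute)
    qed
    then show ?thesis using IH by simp
  qed
qed

lemma harm_le_ln: "n > 0 \<Longrightarrow> harm n \<le> ln (real n) + (1::real)"
  using euler_mascheroni_sequence_decreasing[of 1 n] by (simp add: harm_def)

definition csel :: "selection \<Rightarrow> nat \<Rightarrow> real" where
  "csel s n = (case s of Exponential \<Rightarrow> 1/8 | PowerLaw \<Rightarrow> 1/18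
     | Harmonic \<Rightarrow> 1 / (3 * (ln (real n + 1) + 1)) | Tournament \<Rightarrow> exp (-9) / 27)"

lemma csel_pos: "csel s n > 0"
  by (cases s) (auto simp: csel_def intro!: add_nonneg_pos)

lemma sel_ranking:
  assumes "s \<noteq> Tournament" "1 \<le> \<mu>" "\<mu> \<le> n + 1" "i \<le> 2" "i < \<mu>"
  shows "pmf (rank_index_pmf s \<mu>) i \<ge> csel s n"
proof (cases s)
  case Exponential
  have S: "(\<Sum>j=1..\<mu>. rank_weight s j) = 1 - (1/2)^\<mu>"
    using Exponential by (simp add: rank_weight_def sum_shift1 sum_shift1' sum_exp_w sum_exp_w')
  have S1: "1 - (1/2::real)^\<mu> \<le> 1" "0 < 1 - (1/2::real)^\<mu>" using assms(2)
    by (auto simp: power_less_one_iff intro!: power_less1_D) 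
  have "pmf (rank_index_pmf s \<mu>) i = (1/2)^(Suc i) / (1 - (1/2)^\<mu>)"
    using Exponential assms S S1 by (simp add: rank_index_pmf_def pmf_ranking rank_weight_def)
  also have "\<dots> \<ge> (1/2)^3 / 1"
  proof -
    have "(1/2::real)^3 \<le> (1/2)^(Suc i)" by (rule power_decreasing) (use assms(4) in auto)
    then show ?thesis using S1 by (intro frac_le) auto
  qed
  finally show ?thesis using Exponential by (simp add: csel_def power3_eq_cube)
next
  case PowerLaw
  define S where "S = (\<Sum>j=1..\<mu>. rank_weight s j)"
  have S: "S \<le> 2" using PowerLaw sum_sq_w[OF assms(2)] assms(2)
    by (simp add: S_def rank_weight_def sum_shift1 sum_shift1') (smt (verit) divide_nonneg_nonneg of_nat_0_le_iff)
  have S0: "S \<ge> 1" using PowerLaw assms(2)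
  proof -
    have "S = (\<Sum>k<\<mu>. 1 / (real (Suc k))^2)" using PowerLaw by (simp add: S_def rank_weight_def sum_shift1 sum_shift1')
    also have "\<dots> \<ge> (\<Sum>k\<in>{0}. 1 / (real (Suc k))^2)" using assms(2)
      by (intro sum_mono2) auto
    finally show ?thesis by simp
  qed
  have "pmf (rank_index_pmf s \<mu>) i = (1 / (real (Suc i))^2) / S"
    using PowerLaw assms S0 by (simp add: rank_index_pmf_def pmf_ranking rank_weight_def S_def)
  also have "\<dots> \<ge> (1/9) / 2"
  proof -
    have "real i \<le> 2" using assms(4) by simp
    then have "(1 + real i) * (1 + real i) \<le> 3 * 3" by (intro mult_mono) auto
    then show ?thesis using S S0 by (intro frac_le) (auto simp: power2_eq_square)
  qed
  finally show ?thesis using PowerLaw by (simp add: csel_def)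
next
  case Harmonic
  define S where "S = (\<Sum>j=1..\<mu>. rank_weight s j)"
  have S: "S = harm \<mu>" using Harmonic by (simp add: S_def rank_weight_def harm_def divide_inverse)
  have "harm \<mu> \<le> (harm (n+1) :: real)" using assms by (intro harm_mono) auto
  also have "\<dots> \<le> ln (real n + 1) + 1" using harm_le_ln[of "n+1"] by (simp add: add.commute)
  finally have S1: "S \<le> ln (real n + 1) + 1" using S by simp
  have S0: "S > 0" using S assms(2) by simp
  have "pmf (rank_index_pmf s \<mu>) i = (1 / real (Suc i)) / S"
    using Harmonic assms S0 by (simp add: rank_index_pmf_def pmf_ranking rank_weight_def S_def)
  also have "\<dots> \<ge> (1/3) / (ln (real n + 1) + 1)"
    using S1 S0 assms(4) by (intro frac_le) auto
  finally show ?thesis using Harmonic by (simp add: csel_def)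
next
  case Tournament then show ?thesis using assms by simp
qed

lemma draws_ge:
  assumes mu: "0 < \<mu>" and i: "i \<le> \<mu>"
  shows "emeasure (measure_pmf (min_of_draws k \<mu>)) {a. i \<le> a} = ennreal ((real (\<mu> - i) / real \<mu>) ^ k)"
proof (induction k)
  case 0
  show ?case using i by (simp add: measure_pmf.emeasure_eq_measure)
next
  case (Suc k)
  define q where "q = (real (\<mu> - i) / real \<mu>) ^ k"
  have q: "q \<ge> 0" by (simp add: q_def)
  have E: "\<And>a. emeasure (measure_pmf (map_pmf (min a) (min_of_draws k \<mu>))) {a. i \<le> a}
      = (if i \<le> a then ennreal q else 0)"
  proof -
    fix a
    have "emeasure (measure_pmf (map_pmf (min a) (min_of_draws k \<mu>))) {a. i \<le> a}
        = emeasure (measure_pmf (min_of_draws k \<mu>)) (min a -` {a. i \<le> a})"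
      by (simp add: map_pmf_rep_eq emeasure_distr)
    also have "min a -` {a. i \<le> a} = (if i \<le> a then {a. i \<le> a} else {})" by auto
    finally show "emeasure (measure_pmf (map_pmf (min a) (min_of_draws k \<mu>))) {a. i \<le> a}
      = (if i \<le> a then ennreal q else 0)" using Suc.IH by (simp add: q_def)
  qed
  have "emeasure (measure_pmf (min_of_draws (Suc k) \<mu>)) {a. i \<le> a}
     = (\<integral>\<^sup>+a. emeasure (measure_pmf (map_pmf (min a) (min_of_draws k \<mu>))) {a. i \<le> a} \<partial>measure_pmf (pmf_of_set {..<\<mu>}))"
    by (simp only: min_of_draws.simps emeasure_bind_pmf)
  also have "\<dots> = (\<integral>\<^sup>+a. (if i \<le> a then ennreal q else 0) \<partial>measure_pmf (pmf_of_set {..<\<mu>}))"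
    by (simp only: E)
  also have "\<dots> = (\<Sum>a\<in>{..<\<mu>}. (if i \<le> a then ennreal q else 0)) / of_nat \<mu>"
    using mu by (subst nn_integral_pmf_of_set) (auto simp: lessThan_empty_iff)
  also have "(\<Sum>a\<in>{..<\<mu>}. (if i \<le> a then ennreal q else 0)) = (\<Sum>a\<in>{i..<\<mu>}. ennreal q)"
    by (rule sum.mono_neutral_cong_right) auto
  also have "\<dots> = ennreal (real (\<mu> - i) * q)"
    using q by (simp add: ennreal_of_nat_eq_real_of_nat ennreal_mult)
  also have "\<dots> / of_nat \<mu> = ennreal (real (\<mu> - i) * q / real \<mu>)"
    using mu q by (simp add: ennreal_of_nat_eq_real_of_nat divide_ennreal)
  also have "real (\<mu> - i) * q / real \<mu> = (real (\<mu> - i) / real \<mu>) ^ Suc k"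
    by (simp add: q_def)
  finally show ?case .
qed

lemma pmf_draws:
  assumes mu: "0 < \<mu>" and i: "i < \<mu>"
  shows "pmf (min_of_draws k \<mu>) i = (real (\<mu> - i) / real \<mu>) ^ k - (real (\<mu> - Suc i) / real \<mu>) ^ k"
proof -
  let ?M = "measure_pmf (min_of_draws k \<mu>)"
  have "{a. i \<le> a} = {i} \<union> {a. Suc i \<le> a}" by auto
  then have "emeasure ?M {a. i \<le> a} = emeasure ?M {i} + emeasure ?M {a. Suc i \<le> a}"
    by (simp add: plus_emeasure)
  then have "ennreal ((real (\<mu> - i) / real \<mu>) ^ k) = ennreal (pmf (min_of_draws k \<mu>) i) + ennreal ((real (\<mu> - Suc i) / real \<mu>) ^ k)"
    using draws_ge[OF mu, of i k] draws_ge[OF mu, of "Suc i" k] i by (simp add: emeasure_pmf_single)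
  then have "(real (\<mu> - i) / real \<mu>) ^ k = pmf (min_of_draws k \<mu>) i + (real (\<mu> - Suc i) / real \<mu>) ^ k"
    by (simp add: ennreal_plus[symmetric] del: ennreal_plus)
  then show ?thesis by simp
qed

lemma pow_diff_ge:
  fixes a b :: real
  assumes "0 \<le> b" "b \<le> a"
  shows "a ^ Suc n - b ^ Suc n \<ge> (a - b) * real (Suc n) * b ^ n"
proof -
  have "a ^ Suc n - b ^ Suc n = (a - b) * (\<Sum>p<Suc n. a ^ p * b ^ (n - p))"
    by (rule diff_power_eq_sum)
  also have "(\<Sum>p<Suc n. a ^ p * b ^ (n - p)) \<ge> (\<Sum>p<Suc n. b ^ n)"
  proof (intro sum_mono)
    fix p assume "p \<in> {..<Suc n}"
    then have "b ^ n = b ^ p * b ^ (n - p)" by (simp add: power_add[symmetric])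
    also have "\<dots> \<le> a ^ p * b ^ (n - p)" using assms by (intro mult_right_mono power_mono) auto
    finally show "b ^ n \<le> a ^ p * b ^ (n - p)" .
  qed
  then have "(a - b) * (\<Sum>p<Suc n. a ^ p * b ^ (n - p)) \<ge> (a - b) * (\<Sum>p<Suc n. b ^ n)"
    using assms by (intro mult_left_mono) auto
  finally show ?thesis by (simp add: mult.assoc)
qed

lemma exp9: "exp (-9) \<le> (1::real)" by simp

lemma c_pow:
  assumes mu: "\<mu> \<ge> 4"
  shows "(real (\<mu> - 3) / real \<mu>) ^ (\<mu> - 1) \<ge> exp (-9)"
proof -
  define c where "c = real (\<mu> - 3) / real \<mu>"
  have m3: "real (\<mu> - 3) = real \<mu> - 3" using mu by simp
  have cpos: "c > 0" using mu by (simp add: c_def)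
  have "1 / c = 1 + 3 / (real \<mu> - 3)" using mu by (simp add: c_def m3 field_simps)
  also have "\<dots> \<le> exp (3 / (real \<mu> - 3))" by (rule exp_ge_add_one_self)
  finally have A: "1 / c \<le> exp (3 / (real \<mu> - 3))" .
  have "(1 / c) ^ (\<mu> - 1) \<le> exp (3 / (real \<mu> - 3)) ^ (\<mu> - 1)"
    using A cpos by (intro power_mono) auto
  also have "\<dots> = exp (real (\<mu> - 1) * (3 / (real \<mu> - 3)))" by (rule exp_of_nat_mult[symmetric])
  also have "\<dots> \<le> exp 9"
  proof -
    have "real (\<mu> - 1) * 3 \<le> 9 * (real \<mu> - 3)" using mu by simp
    then have "real (\<mu> - 1) * (3 / (real \<mu> - 3)) \<le> 9" using mu by (simp add: field_simps)
    then show ?thesis by simp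
  qed
  finally have "(1 / c) ^ (\<mu> - 1) \<le> exp 9" .
  then have "1 / exp 9 \<le> 1 / (1 / c) ^ (\<mu> - 1)" using cpos by (intro divide_left_mono) auto
  then show ?thesis by (simp add: c_def[symmetric] exp_minus power_one_over field_simps)
qed

lemma tournament_bound:
  assumes mu: "0 < \<mu>" and i: "i < \<mu>" "i \<le> 2"
  shows "(real (\<mu> - i) / real \<mu>) ^ \<mu> - (real (\<mu> - Suc i) / real \<mu>) ^ \<mu> \<ge> exp (-9) / 27"
proof -
  define a where "a = real (\<mu> - i) / real \<mu>"
  define b where "b = real (\<mu> - Suc i) / real \<mu>"
  obtain n' where n': "\<mu> = Suc n'" using mu by (cases \<mu>) auto
  have b0: "0 \<le> b" by (simp add: b_def)
  have ab: "a - b = 1 / real \<mu>" using i by (simp add: a_def b_def of_nat_diff field_simps)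
  have "a ^ \<mu> - b ^ \<mu> \<ge> (a - b) * real \<mu> * b ^ (\<mu> - 1)"
  proof -
    have "b \<le> a" using ab by (smt (verit) divide_nonneg_nonneg of_nat_0_le_iff)
    then show ?thesis using pow_diff_ge[of b a n'] b0 n' by simp
  qed
  also have "(a - b) * real \<mu> * b ^ (\<mu> - 1) = b ^ (\<mu> - 1)" using ab mu by simp
  finally have main: "a ^ \<mu> - b ^ \<mu> \<ge> b ^ (\<mu> - 1)" .
  show ?thesis
  proof (cases "\<mu> = Suc i")
    case True
    then have "b = 0" by (simp add: b_def)
    then have "a ^ \<mu> - b ^ \<mu> = (1 / real \<mu>) ^ \<mu>" using True mu by (simp add: a_def)
    also have "(1 / real \<mu>) ^ \<mu> \<ge> (1/3) ^ \<mu>" using True i by (intro power_mono) auto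
    also have "(1/3::real) ^ \<mu> \<ge> (1/3) ^ 3" using True i by (intro power_decreasing) auto
    finally have "a ^ \<mu> - b ^ \<mu> \<ge> (1/3) ^ 3" .
    moreover have "(1/3::real) ^ 3 = 1/27" by (simp add: power3_eq_cube)
    ultimately show ?thesis using exp9 unfolding a_def b_def by linarith
  next
    case False
    show ?thesis
    proof (cases "\<mu> \<le> 3")
      case True
      have "b \<ge> 1 / 3" using False True i mu by (simp add: b_def field_simps)
      then have "b ^ (\<mu> - 1) \<ge> (1/3) ^ (\<mu> - 1)" by (intro power_mono) auto
      moreover have "(1/3::real) ^ (\<mu> - 1) \<ge> (1/3) ^ 2" using True by (intro power_decreasing) auto
      ultimately have "b ^ (\<mu> - 1) \<ge> 1/9" by (simp add: power2_eq_square)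
      then show ?thesis using main exp9 unfolding a_def b_def by linarith
    next
      case False
      then have m4: "\<mu> \<ge> 4" by simp
      have "b \<ge> real (\<mu> - 3) / real \<mu>" using i m4 by (simp add: b_def divide_right_mono)
      then have "b ^ (\<mu> - 1) \<ge> (real (\<mu> - 3) / real \<mu>) ^ (\<mu> - 1)" by (intro power_mono) auto
      with c_pow[OF m4] have "b ^ (\<mu> - 1) \<ge> exp (-9)" by linarith
      moreover have "exp (-9) / 27 \<le> exp (-9::real)" by simp
      ultimately show ?thesis using main unfolding a_def b_def by linarith
    qed
  qed
qed

lemma sel_tournament:
  assumes "1 \<le> \<mu>" "i \<le> 2" "i < \<mu>"
  shows "pmf (rank_index_pmf Tournament \<mu>) i \<ge> csel Tournament n"
  using tournament_bound[of \<mu> i] pmf_draws[of \<mu> i \<mu>] assms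
  by (simp add: rank_index_pmf_def csel_def)

lemma sel_bound:
  assumes "1 \<le> \<mu>" "\<mu> \<le> n + 1" "i \<le> 2" "i < \<mu>"
  shows "pmf (rank_index_pmf s \<mu>) i \<ge> csel s n"
  using sel_tournament[OF assms(1,3,4)] sel_ranking[OF _ assms] by (cases "s = Tournament") auto

lemma cube_fin: "finite (cube n)"
  unfolding cube_def using finite_lists_length_eq[of "UNIV :: bool set" n] by simp

lemma population_iff: "population n (OneMinMax n) P \<longleftrightarrow> P \<noteq> {} \<and> P \<subseteq> cube n \<and> inj_on ones P"
  by (auto simp: population_def wdom inj_on_def)

lemma good_iff:
  assumes P: "P \<subseteq> cube n"
  shows "good n (OneMinMax n) P x \<longleftrightarrow> x \<in> P \<and> (\<exists>j\<le>n. j \<notin> ones ` P \<and> (j + 1 = ones x \<or> j = ones x + 1))"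
proof
  assume g: "good n (OneMinMax n) P x"
  then have xP: "x \<in> P" by (simp add: good_def)
  from g obtain y where y: "length y = length x" "hamming x y = 1" "y \<in> cube n"
      "OneMinMax n y \<notin> OneMinMax n ` P"
    by (auto simp: good_def pareto_cube)
  from hamming_one[OF y(1,2)] obtain i where i: "i < length x" "y = flip_bit i x" by blast
  have "ones y \<le> n" using y(3) ones_le[of y] by (simp add: cube_def)
  moreover have "ones y \<notin> ones ` P" using y(4) OMM_img by blast
  moreover have "ones y + 1 = ones x \<or> ones y = ones x + 1" using ones_flip_cases[OF i(1)] i(2) by simp
  ultimately show "x \<in> P \<and> (\<exists>j\<le>n. j \<notin> ones ` P \<and> (j + 1 = ones x \<or> j = ones x + 1))"
    using xP by blast
next
  assume "x \<in> P \<and> (\<exists>j\<le>n. j \<notin> ones ` P \<and> (j + 1 = ones x \<or> j = ones x + 1))"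
  then obtain j where x: "x \<in> P" and j: "j \<le> n" "j \<notin> ones ` P" "j + 1 = ones x \<or> j = ones x + 1" by blast
  have lx: "length x = n" using x P by (auto simp: cube_def)
  obtain I where I: "I \<subseteq> {..<n}" "card I \<ge> dd n j" "\<And>i. i \<in> I \<Longrightarrow> ones (flip_bit i x) = j"
    using target_set[OF lx j(3) j(1)] by blast
  have "dd n j \<ge> 1" using j(1) by (simp add: dd_def)
  then have "I \<noteq> {}" using I(2) by auto
  then obtain i where i: "i \<in> I" by blast
  let ?y = "flip_bit i x"
  have il: "i < length x" using i I(1) lx by auto
  have "length ?y = length x" "hamming x ?y = 1" "?y \<in> cube n"
    using il lx hamming_flip[OF il] by (auto simp: cube_def)
  moreover have "OneMinMax n ?y \<notin> OneMinMax n ` P" using OMM_img I(3)[OF i] j(2) by auto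
  ultimately have "\<exists>y. length y = length x \<and> hamming x y = 1 \<and> y \<in> cube n \<and> OneMinMax n y \<notin> OneMinMax n ` P"
    by blast
  moreover have "x \<in> P \<inter> cube n" using x P by blast
  ultimately show "good n (OneMinMax n) P x" unfolding good_def pareto_cube by blast
qed

lemma closure_lemma:
  fixes k n :: nat
  assumes k: "k \<in> K" "0 < k" "k < n"
    and cl: "\<And>k'. k' \<in> K \<Longrightarrow> 0 < k' \<Longrightarrow> k' < n \<Longrightarrow> k' - 1 \<in> K \<and> k' + 1 \<in> K"
  shows "{0..n} \<subseteq> K"
proof -
  have down: "\<forall>d. d \<le> k \<longrightarrow> k - d \<in> K"
  proof (intro allI)
    fix d show "d \<le> k \<longrightarrow> k - d \<in> K"
    proof (induction d)
      case 0 then show ?case using k by simp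
    next
      case (Suc d)
      show ?case
      proof
        assume "Suc d \<le> k"
        then have "k - d \<in> K" "0 < k - d" "k - d < n" using Suc k by auto
        from cl[OF this] have "k - d - 1 \<in> K" by blast
        then show "k - Suc d \<in> K" by simp
      qed
    qed
  qed
  have up: "\<forall>d. d \<le> n - k \<longrightarrow> k + d \<in> K"
  proof (intro allI)
    fix d show "d \<le> n - k \<longrightarrow> k + d \<in> K"
    proof (induction d)
      case 0 then show ?case using k by simp
    next
      case (Suc d)
      show ?case
      proof
        assume "Suc d \<le> n - k"
        then have "k + d \<in> K" "0 < k + d" "k + d < n" using Suc k by auto
        from cl[OF this] have "k + d + 1 \<in> K" by blast
        then show "k + Suc d \<in> K" by simp
      qed
    qed
  qed
  show ?thesis
  proof
    fix j assume "j \<in> {0..n}"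
    then have j: "j \<le> n" by simp
    show "j \<in> K"
    proof (cases "j \<le> k")
      case True
      then show ?thesis using down[rule_format, of "k - j"] by simp
    next
      case False
      then show ?thesis using up[rule_format, of "j - k"] j by simp
    qed
  qed
qed

lemma ones_rep: "ones (replicate n False) = 0" "ones (replicate n True) = n"
  by (simp_all add: ones_def count_rep count_list_0_iff)

lemma good_rank:
  assumes n2: "n \<ge> 2"
    and df: "diversity_favouring n (OneMinMax n) (cube n - {replicate n False, replicate n True}) sc"
    and rkk: "is_score_ranking sc r"
    and P: "P \<noteq> {}" "P \<subseteq> cube n" "inj_on ones P"
    and nc: "ones ` P \<noteq> {0..n}"
  shows "\<exists>i j. i \<le> 2 \<and> i < card P \<and> j \<le> n \<and> j \<notin> ones ` P \<and> (j + 1 = ones (r P ! i) \<or> j = ones (r P ! i) + 1)"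
proof -
  define E where "E = {replicate n False, replicate n True}"
  define L where "L = r P"
  have finP: "finite P" using P(2) cube_fin finite_subset by blast
  have L: "distinct L" "set L = P" "sorted_wrt (\<lambda>x y. sc P x \<ge> sc P y) L"
    using rkk finP by (auto simp: is_score_ranking_def L_def)
  have lenL: "length L = card P" using L distinct_card by fastforce
  have pop: "population n (OneMinMax n) P" using P by (simp add: population_iff)
  show ?thesis
  proof (cases "\<exists>y\<in>P. y \<notin> E \<and> good n (OneMinMax n) P y")
    case True
    define Q where "Q = (\<lambda>i. i < length L \<and> L ! i \<notin> E \<and> good n (OneMinMax n) P (L ! i))"
    from True obtain y where y: "y \<in> P" "y \<notin> E" "good n (OneMinMax n) P y" by blast
    then obtain i where "i < length L" "L ! i = y" using L(2) by (metis in_set_conv_nth)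
    then have "Q i" using y by (simp add: Q_def)
    define i0 where "i0 = (LEAST i. Q i)"
    have Qi0: "Q i0" using LeastI[of Q, OF \<open>Q i\<close>] by (simp add: i0_def)
    have H: "\<forall>x y. x \<in> P \<inter> cube n \<inter> (cube n - E) \<longrightarrow> y \<in> P \<inter> cube n \<inter> (cube n - E) \<longrightarrow>
               bad n (OneMinMax n) P x \<longrightarrow> good n (OneMinMax n) P y \<longrightarrow> sc P x < sc P y"
      using df pop unfolding diversity_favouring_def pareto_cube E_def by blast
    have before: "L ! l \<in> E" if l1: "l < i0" for l
    proof (rule ccontr)
      assume l2: "L ! l \<notin> E"
      have nQ: "\<not> Q l" using not_less_Least[of l Q] l1 by (simp add: i0_def)
      have ll: "l < length L" using l1 Qi0 by (simp add: Q_def)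
      then have inP: "L ! l \<in> P" using L(2) nth_mem by blast
      then have incube: "L ! l \<in> cube n" using P(2) by blast
      have bad: "bad n (OneMinMax n) P (L ! l)"
        using nQ ll l2 inP incube by (simp add: Q_def bad_def pareto_cube)
      have i0P: "L ! i0 \<in> P" using Qi0 L(2) nth_mem by (auto simp: Q_def)
      then have i0c: "L ! i0 \<in> cube n" using P(2) by blast
      have "sc P (L ! l) < sc P (L ! i0)"
        using H[rule_format, of "L ! l" "L ! i0"] inP incube l2 i0P i0c bad Qi0 by (simp add: Q_def)
      moreover have "sc P (L ! l) \<ge> sc P (L ! i0)"
        using L(3) l1 Qi0 by (auto simp: sorted_wrt_iff_nth_less Q_def)
      ultimately show False by simp
    qed
    have "(\<lambda>l. L ! l) ` {..<i0} \<subseteq> E" using before by auto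
    moreover have "inj_on (\<lambda>l. L ! l) {..<i0}"
      using L(1) Qi0 by (auto simp: inj_on_def Q_def nth_eq_iff_index_eq)
    ultimately have "card {..<i0} \<le> card E"
      by (metis card_image card_mono finite.emptyI finite.insertI E_def)
    also have "card E \<le> 2" by (simp add: E_def card_insert_le_m1)
    finally have i02: "i0 \<le> 2" by simp
    from Qi0 have "good n (OneMinMax n) P (L ! i0)" "i0 < length L" by (auto simp: Q_def)
    then obtain j where "j \<le> n" "j \<notin> ones ` P" "j + 1 = ones (L ! i0) \<or> j = ones (L ! i0) + 1"
      using good_iff[OF P(2)] by blast
    then show ?thesis using i02 \<open>i0 < length L\<close> lenL by (auto simp: L_def)
  next
    case False
    have sub: "ones ` P \<subseteq> {0, n}"
    proof (rule ccontr)
      assume "\<not> ones ` P \<subseteq> {0, n}"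
      then obtain k where k: "k \<in> ones ` P" "k \<noteq> 0" "k \<noteq> n" by blast
      have kn: "\<And>k. k \<in> ones ` P \<Longrightarrow> k \<le> n" using P(2) ones_le by (auto simp: cube_def)
      have cl: "k' - 1 \<in> ones ` P \<and> k' + 1 \<in> ones ` P"
        if k': "k' \<in> ones ` P" "0 < k'" "k' < n" for k'
      proof -
        from k' obtain x where x: "x \<in> P" "ones x = k'" by blast
        have "x \<notin> E" using x k' by (auto simp: E_def ones_rep)
        then have ng: "\<not> good n (OneMinMax n) P x" using False x by blast
        have "k' - 1 \<le> n" "k' - 1 + 1 = ones x" "k' + 1 \<le> n" using k' x by auto
        then show ?thesis using ng good_iff[OF P(2), of x] x by (metis)
      qed
      have "{0..n} \<subseteq> ones ` P" using closure_lemma[of k "ones ` P" n] k kn cl by fastforce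
      moreover have "ones ` P \<subseteq> {0..n}" using kn by auto
      ultimately show False using nc by blast
    qed
    have cardP: "card P \<le> 2"
    proof -
      have "card P = card (ones ` P)" using P(3) by (simp add: card_image)
      also have "\<dots> \<le> card {0, n}" using sub by (intro card_mono) auto
      also have "\<dots> \<le> 2" by (simp add: card_insert_le_m1)
      finally show ?thesis .
    qed
    obtain x j where xj: "x \<in> P" "j \<le> n" "j \<notin> ones ` P" "j + 1 = ones x \<or> j = ones x + 1"
    proof -
      obtain x where x: "x \<in> P" using P(1) by blast
      then have "ones x = 0 \<or> ones x = n" using sub by auto
      then show ?thesis
      proof
        assume "ones x = 0"
        moreover have "1 \<notin> ones ` P" using sub n2 by auto
        ultimately show ?thesis using that[of x 1] x n2 by auto
      next
        assume "ones x = n"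
        moreover have "n - 1 \<notin> ones ` P" using sub n2 by auto
        ultimately show ?thesis using that[of x "n - 1"] x n2 by auto
      qed
    qed
    obtain i where i: "i < length L" "L ! i = x" using xj(1) L(2) by (metis in_set_conv_nth)
    show ?thesis using i xj cardP lenL by (intro exI[of _ i] exI[of _ j]) (auto simp: L_def)
  qed
qed

definition Wt :: "selection \<Rightarrow> nat \<Rightarrow> real" where
  "Wt s n = real n * exp 1 / csel s n"

definition Phi :: "selection \<Rightarrow> nat \<Rightarrow> pop \<Rightarrow> real" where
  "Phi s n P = Wt s n * (\<Sum>j\<in>{0..n} - ones ` P. 1 / real (dd n j))"

lemma Wt_nn: "Wt s n \<ge> 0"
  using csel_pos[of s n] by (simp add: Wt_def)

lemma Phi_nn: "Phi s n P \<ge> 0"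
  using Wt_nn by (simp add: Phi_def sum_nonneg)

lemma Phi_update:
  assumes j: "j \<in> {0..n} - ones ` P"
  shows "Phi s n (update (OneMinMax n) P z) + (if ones z = j then Wt s n * (1 / real (dd n j)) else 0) \<le> Phi s n P"
proof -
  define K where "K = {0..n} - ones ` P"
  have K': "{0..n} - ones ` update (OneMinMax n) P z = K - {ones z}"
    by (auto simp: ones_update K_def)
  have finK: "finite K" by (simp add: K_def)
  have S: "(\<Sum>k\<in>K - {ones z}. 1 / real (dd n k)) + (if ones z \<in> K then 1 / real (dd n (ones z)) else 0)
      = (\<Sum>k\<in>K. 1 / real (dd n k))"
  proof (cases "ones z \<in> K")
    case True
    then show ?thesis using finK by (simp add: sum_diff1)
  next
    case False
    then show ?thesis by simp
  qed
  have "Phi s n (update (OneMinMax n) P z) + (if ones z = j then Wt s n * (1 / real (dd n j)) else 0)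
     \<le> Wt s n * (\<Sum>k\<in>K - {ones z}. 1 / real (dd n k)) + Wt s n * (if ones z \<in> K then 1 / real (dd n (ones z)) else 0)"
    using j Wt_nn by (auto simp: Phi_def K' K_def)
  also have "\<dots> = Phi s n P" unfolding Phi_def K_def[symmetric] S[symmetric] by (simp add: distrib_left)
  finally show ?thesis .
qed

lemma Phi_update_le: "Phi s n (update (OneMinMax n) P z) \<le> Phi s n P"
proof -
  have "{0..n} - ones ` update (OneMinMax n) P z \<subseteq> {0..n} - ones ` P" by (auto simp: ones_update)
  then have "(\<Sum>j\<in>{0..n} - ones ` update (OneMinMax n) P z. 1 / real (dd n j)) \<le> (\<Sum>j\<in>{0..n} - ones ` P. 1 / real (dd n j))"
    by (intro sum_mono2) auto
  then show ?thesis unfolding Phi_def using Wt_nn by (intro mult_left_mono) auto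
qed

lemma drift_step:
  assumes n2: "n \<ge> 2"
    and df: "diversity_favouring n (OneMinMax n) (cube n - {replicate n False, replicate n True}) sc"
    and rkk: "is_score_ranking sc r"
    and P: "P \<noteq> {}" "P \<subseteq> cube n" "inj_on ones P"
    and nc: "ones ` P \<noteq> {0..n}"
  shows "(\<integral>\<^sup>+Q. ennreal (Phi s n Q) \<partial>step m s n (OneMinMax n) r P) + 1 \<le> ennreal (Phi s n P)"
proof -
  obtain i j where ij: "i \<le> 2" "i < card P" "j \<le> n" "j \<notin> ones ` P"
      "j + 1 = ones (r P ! i) \<or> j = ones (r P ! i) + 1"
    using good_rank[OF n2 df rkk P nc] by blast
  define x where "x = r P ! i"
  define \<mu> where "\<mu> = card P"
  define R where "R = rank_index_pmf s \<mu>"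
  define Sel where "Sel = map_pmf (\<lambda>i. r P ! i) R"
  define c where "c = csel s n"
  have cpos: "c > 0" using csel_pos by (simp add: c_def)
  have finP: "finite P" using P(2) cube_fin finite_subset by blast
  have mu1: "1 \<le> \<mu>" using P(1) finP by (simp add: \<mu>_def Suc_le_eq card_gt_0_iff)
  have "\<mu> = card (ones ` P)" using P(3) by (simp add: card_image \<mu>_def)
  also have "\<dots> \<le> card {0..n}" using P(2) ones_le by (intro card_mono) (auto simp: cube_def)
  finally have mun: "\<mu> \<le> n + 1" by simp
  have xP: "x \<in> P"
  proof -
    have d: "set (r P) = P" "distinct (r P)"
      using rkk finP by (auto simp: is_score_ranking_def)
    then have "length (r P) = card P" using distinct_card by fastforce
    note d this
    then show ?thesis using ij(2) x_def nth_mem by (metis d(1))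
  qed
  have lx: "length x = n" using xP P(2) by (auto simp: cube_def)
  have selR: "pmf R i \<ge> c" unfolding R_def c_def
    using sel_bound[OF mu1 mun ij(1)] ij(2) by (simp add: \<mu>_def)
  have selx: "pmf Sel x \<ge> c"
  proof -
    have "pmf Sel x = measure R ((\<lambda>i. r P ! i) -` {x})" by (simp add: Sel_def pmf_map)
    also have "\<dots> \<ge> measure R {i}" using x_def by (intro measure_pmf.finite_measure_mono) auto
    finally show ?thesis using selR by (simp add: measure_pmf_single)
  qed
  define H where "H = {z. ones z = j}"
  define ph where "ph = measure_pmf.prob (mutate m n x) H"
  have hit: "ph \<ge> real (dd n j) / (exp 1 * real n)"
    unfolding ph_def H_def using mutate_hit[of n x j m] n2 lx ij(3,5) x_def by simp
  define w where "w = Wt s n * (1 / real (dd n j))"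
  have w_nn: "w \<ge> 0" using Wt_nn by (simp add: w_def)
  have ddpos: "real (dd n j) > 0" using ij(3) by (simp add: dd_def)
  have "w * ph * pmf Sel x \<ge> w * (real (dd n j) / (exp 1 * real n)) * c"
    using hit selx w_nn cpos by (intro mult_mono) (auto simp: ph_def)
  also have "w * (real (dd n j) / (exp 1 * real n)) * c = 1"
    using ddpos cpos n2 by (simp add: w_def Wt_def c_def field_simps)
  finally have wpc: "w * ph * pmf Sel x \<ge> 1" .
  define h where "h = (\<lambda>y. \<integral>\<^sup>+z. ennreal (Phi s n (update (OneMinMax n) P z)) \<partial>mutate m n y)"
  have jK: "j \<in> {0..n} - ones ` P" using ij by auto
  have hx: "h y + (if y = x then ennreal (w * ph) else 0) \<le> ennreal (Phi s n P)" for y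
  proof (cases "y = x")
    case True
    have "h y + ennreal (w * ph) = (\<integral>\<^sup>+z. ennreal (Phi s n (update (OneMinMax n) P z)) + ennreal w * indicator H z \<partial>mutate m n x)"
      using True w_nn by (simp add: h_def nn_integral_add nn_integral_cmult_indicator ph_def
          measure_pmf.emeasure_eq_measure ennreal_mult)
    also have "\<dots> \<le> (\<integral>\<^sup>+z. ennreal (Phi s n P) \<partial>mutate m n x)"
    proof (intro nn_integral_mono)
      fix z
      have "Phi s n (update (OneMinMax n) P z) + (if ones z = j then w else 0) \<le> Phi s n P"
        using Phi_update[OF jK, of s z] unfolding w_def by simp
      then show "ennreal (Phi s n (update (OneMinMax n) P z)) + ennreal w * indicator H z \<le> ennreal (Phi s n P)"
        using w_nn Phi_nn by (auto simp: H_def indicator_def ennreal_plus[symmetric] simp del: ennreal_plus)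
    qed
    also have "\<dots> = ennreal (Phi s n P)" by (simp add: measure_pmf.emeasure_space_1)
    finally show ?thesis using True by simp
  next
    case False
    have "h y \<le> (\<integral>\<^sup>+z. ennreal (Phi s n P) \<partial>mutate m n y)"
      unfolding h_def by (intro nn_integral_mono ennreal_leI Phi_update_le)
    also have "\<dots> = ennreal (Phi s n P)" by (simp add: measure_pmf.emeasure_space_1)
    finally show ?thesis using False by simp
  qed
  have "(\<integral>\<^sup>+Q. ennreal (Phi s n Q) \<partial>step m s n (OneMinMax n) r P) = (\<integral>\<^sup>+y. h y \<partial>Sel)"
    by (simp add: step_def h_def Sel_def R_def \<mu>_def)
  moreover have "(\<integral>\<^sup>+y. h y \<partial>Sel) + ennreal (w * ph) * ennreal (pmf Sel x)
      = (\<integral>\<^sup>+y. h y + ennreal (w * ph) * indicator {x} y \<partial>Sel)"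
    by (simp add: nn_integral_add nn_integral_cmult_indicator emeasure_pmf_single)
  moreover have "(\<integral>\<^sup>+y. h y + ennreal (w * ph) * indicator {x} y \<partial>Sel) \<le> (\<integral>\<^sup>+y. ennreal (Phi s n P) \<partial>Sel)"
  proof (intro nn_integral_mono)
    fix y
    show "h y + ennreal (w * ph) * indicator {x} y \<le> ennreal (Phi s n P)"
      using hx[of y] by (cases "y = x") auto
  qed
  moreover have "(\<integral>\<^sup>+y. ennreal (Phi s n P) \<partial>Sel) = ennreal (Phi s n P)"
    by (simp add: measure_pmf.emeasure_space_1)
  moreover have "ennreal (w * ph) * ennreal (pmf Sel x) \<ge> 1"
  proof -
    have "ennreal (w * ph) * ennreal (pmf Sel x) = ennreal (w * ph * pmf Sel x)"
      using w_nn by (simp add: ennreal_mult[symmetric] ph_def)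
    also have "\<dots> \<ge> ennreal 1" using wpc by (intro ennreal_leI)
    finally show ?thesis by simp
  qed
  ultimately show ?thesis
    by (metis add_left_mono order_trans)
qed

definition valid :: "nat \<Rightarrow> pop \<Rightarrow> bool" where
  "valid n P \<longleftrightarrow> P \<noteq> {} \<and> P \<subseteq> cube n \<and> inj_on ones P"

lemma bw_len: "z \<in> set_pmf (bitwise_mutation p x) \<Longrightarrow> length z = length x"
  by (induction x arbitrary: z) auto

lemma mutate_len: "z \<in> set_pmf (mutate m n x) \<Longrightarrow> length x = n \<Longrightarrow> length z = n"
  by (cases m) (auto simp: mutate_def dest: bw_len)

lemma draws_support: "0 < \<mu> \<Longrightarrow> 0 < k \<Longrightarrow> i \<in> set_pmf (min_of_draws k \<mu>) \<Longrightarrow> i < \<mu>"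
proof (induction k arbitrary: i)
  case 0 then show ?case by simp
next
  case (Suc k)
  then show ?case by (auto simp: lessThan_empty_iff min_def split: if_splits)
qed

lemma rank_support:
  assumes mu: "1 \<le> \<mu>" and i: "i \<in> set_pmf (rank_index_pmf s \<mu>)"
  shows "i < \<mu>"
proof (cases "s = Tournament")
  case True
  then show ?thesis using draws_support[of \<mu> \<mu> i] mu i by (simp add: rank_index_pmf_def)
next
  case False
  define w where "w = rank_weight s"
  have nn: "\<And>j. 0 \<le> w j" by (cases s) (auto simp: w_def rank_weight_def)
  have "(\<Sum>j\<in>{1}. w j) \<le> (\<Sum>j=1..\<mu>. w j)" using mu nn by (intro sum_mono2) auto
  moreover have "w 1 > 0" using False by (cases s) (auto simp: w_def rank_weight_def)
  ultimately have pos: "0 < (\<Sum>j=1..\<mu>. w j)" by simp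
  have "rank_index_pmf s \<mu> = ranking_pmf w \<mu>" using False by (cases s) (auto simp: rank_index_pmf_def w_def)
  then have "pmf (rank_index_pmf s \<mu>) i \<noteq> 0" using i by (simp add: set_pmf_iff)
  then show ?thesis using pmf_ranking[OF nn pos, of i] \<open>rank_index_pmf s \<mu> = ranking_pmf w \<mu>\<close>
    by (auto split: if_splits)
qed

lemma valid_update: "valid n P \<Longrightarrow> z \<in> cube n \<Longrightarrow> valid n (update (OneMinMax n) P z)"
  by (auto simp: valid_def update_eq inj_on_def)

lemma valid_step:
  assumes ranking: "is_score_ranking sc r" and P: "valid n P"
    and Q: "Q \<in> set_pmf (stopped_step m s n (OneMinMax n) r P)"
  shows "valid n Q"
proof (cases "covers_front n (OneMinMax n) P")
  case True
  then show ?thesis using Q P by (simp add: stopped_step_def)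
next
  case False
  have finP: "finite P" using P cube_fin finite_subset by (auto simp: valid_def)
  have rP: "set (r P) = P" "distinct (r P)" using ranking finP by (auto simp: is_score_ranking_def)
  then have lenr: "length (r P) = card P" using distinct_card by fastforce
  have mu1: "1 \<le> card P" using P finP by (auto simp: valid_def Suc_le_eq card_gt_0_iff)
  from Q False obtain i z where iz: "i \<in> set_pmf (rank_index_pmf s (card P))"
      "z \<in> set_pmf (mutate m n (r P ! i))" "Q = update (OneMinMax n) P z"
    by (auto simp: stopped_step_def step_def)
  have "i < card P" using rank_support[OF mu1 iz(1)] .
  then have "r P ! i \<in> P" using rP lenr nth_mem by metis
  then have "length (r P ! i) = n" using P by (auto simp: valid_def cube_def)
  then have "z \<in> cube n" using mutate_len iz(2) by (auto simp: cube_def)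
  then show ?thesis using valid_update P iz(3) by simp
qed

lemma valid_init: "n \<ge> 1 \<Longrightarrow> P \<in> set_pmf (init_pop n) \<Longrightarrow> valid n P"
proof -
  assume n: "n \<ge> 1" and P: "P \<in> set_pmf (init_pop n)"
  have ne: "cube n \<noteq> {}" using cube_ones[of n] by auto
  then show ?thesis using P cube_fin[of n] by (auto simp: init_pop_def valid_def)
qed

lemma pop_dist_Suc: "pop_dist m s n f r (Suc t) = bind_pmf (pop_dist m s n f r t) (stopped_step m s n f r)"
  by (simp add: pop_dist_def)

lemma valid_pop_dist:
  assumes "n \<ge> 1" "is_score_ranking sc r"
  shows "P \<in> set_pmf (pop_dist m s n (OneMinMax n) r t) \<Longrightarrow> valid n P"
proof (induction t arbitrary: P)
  case 0 then show ?case using valid_init[OF assms(1)] by (simp add: pop_dist_def)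
next
  case (Suc t)
  then show ?case using valid_step[OF assms(2)] by (auto simp: pop_dist_Suc) blast
qed

lemma one_step:
  assumes n2: "n \<ge> 2"
    and df: "diversity_favouring n (OneMinMax n) (cube n - {replicate n False, replicate n True}) sc"
    and rkk: "is_score_ranking sc r"
    and P: "valid n P"
  shows "(\<integral>\<^sup>+Q. ennreal (Phi s n Q) \<partial>stopped_step m s n (OneMinMax n) r P)
     + indicator {P. \<not> covers_front n (OneMinMax n) P} P \<le> ennreal (Phi s n P)"
proof (cases "covers_front n (OneMinMax n) P")
  case True
  then show ?thesis by (simp add: stopped_step_def)
next
  case False
  have Pv: "P \<noteq> {}" "P \<subseteq> cube n" "inj_on ones P" using P by (auto simp: valid_def)
  have nc: "ones ` P \<noteq> {0..n}" using False covers_iff[OF Pv(2)] by simp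
  show ?thesis using drift_step[OF n2 df rkk Pv nc, where s=s and m=m] False by (simp add: stopped_step_def)
qed

definition Bnd :: "selection \<Rightarrow> nat \<Rightarrow> real" where
  "Bnd s n = Wt s n * (\<Sum>j\<in>{0..n}. 1 / real (dd n j))"

lemma Phi_le_Bnd: "Phi s n P \<le> Bnd s n"
  unfolding Phi_def Bnd_def using Wt_nn by (intro mult_left_mono sum_mono2) auto

lemma expected_le:
  assumes n2: "n \<ge> 2"
    and df: "diversity_favouring n (OneMinMax n) (cube n - {replicate n False, replicate n True}) sc"
    and rkk: "is_score_ranking sc r"
  shows "expected_time m s n (OneMinMax n) r \<le> ennreal (Bnd s n)"
proof -
  define D where "D = pop_dist m s n (OneMinMax n) r"
  define E where "E = (\<lambda>t. \<integral>\<^sup>+P. ennreal (Phi s n P) \<partial>D t)"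
  define pr where "pr = (\<lambda>t. ennreal (measure_pmf.prob (D t) {P. \<not> covers_front n (OneMinMax n) P}))"
  have val: "\<And>t P. P \<in> set_pmf (D t) \<Longrightarrow> valid n P" using valid_pop_dist[OF _ rkk] n2 by (simp add: D_def)
  have stepE: "E (Suc t) + pr t \<le> E t" for t
  proof -
    have "pr t = (\<integral>\<^sup>+P. indicator {P. \<not> covers_front n (OneMinMax n) P} P \<partial>D t)"
      by (simp add: pr_def measure_pmf.emeasure_eq_measure[symmetric])
    moreover have "E (Suc t) = (\<integral>\<^sup>+P. (\<integral>\<^sup>+Q. ennreal (Phi s n Q) \<partial>stopped_step m s n (OneMinMax n) r P) \<partial>D t)"
      by (simp add: E_def D_def pop_dist_Suc)
    ultimately have "E (Suc t) + pr t = (\<integral>\<^sup>+P. (\<integral>\<^sup>+Q. ennreal (Phi s n Q) \<partial>stopped_step m s n (OneMinMax n) r P)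
        + indicator {P. \<not> covers_front n (OneMinMax n) P} P \<partial>D t)"
      by (simp add: nn_integral_add)
    also have "\<dots> \<le> E t" unfolding E_def
      by (intro nn_integral_mono_AE) (auto simp: AE_measure_pmf_iff intro!: one_step[OF n2 df rkk] val)
    finally show ?thesis .
  qed
  have tele: "(\<Sum>t<N. pr t) + E N \<le> E 0" for N
  proof (induction N)
    case 0 then show ?case by simp
  next
    case (Suc N)
    have "(\<Sum>t<Suc N. pr t) + E (Suc N) = (\<Sum>t<N. pr t) + (E (Suc N) + pr N)" by (simp add: ac_simps)
    also have "\<dots> \<le> (\<Sum>t<N. pr t) + E N" using stepE[of N] by (intro add_left_mono)
    also have "\<dots> \<le> E 0" using Suc .
    finally show ?case .
  qed
  have E0: "E 0 \<le> ennreal (Bnd s n)"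
  proof -
    have "E 0 \<le> (\<integral>\<^sup>+P. ennreal (Bnd s n) \<partial>D 0)" unfolding E_def
      by (intro nn_integral_mono ennreal_leI Phi_le_Bnd)
    also have "\<dots> = ennreal (Bnd s n)" by (simp add: measure_pmf.emeasure_space_1)
    finally show ?thesis .
  qed
  have "(\<Sum>t<N. pr t) \<le> ennreal (Bnd s n)" for N
    using tele[of N] E0 by (meson add_increasing2 order_trans zero_le le_iff_add)
  then have "suminf pr \<le> ennreal (Bnd s n)" by (intro suminf_le_const) auto
  then show ?thesis by (simp add: expected_time_def pr_def D_def)
qed

lemma sum_inv_harm: "(\<Sum>j\<in>{0..n}. 1 / real (j + 1)) = (harm (n + 1) :: real)"
proof -
  have "{0..n} = {..<Suc n}" by auto
  then show ?thesis by (simp add: harm_altdef divide_inverse add.commute)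
qed

lemma sum_inv_rev: "(\<Sum>j\<in>{0..n}. 1 / real (n + 1 - j)) = (\<Sum>j\<in>{0..n}. 1 / real (j + 1))"
  by (rule sum.reindex_bij_witness[of _ "\<lambda>j. n - j" "\<lambda>j. n - j"]) auto

lemma sum_dd: "(\<Sum>j\<in>{0..n}. 1 / real (dd n j)) \<le> 2 * harm (n + 1)"
proof -
  have "(\<Sum>j\<in>{0..n}. 1 / real (dd n j)) \<le> (\<Sum>j\<in>{0..n}. 1 / real (j + 1) + 1 / real (n + 1 - j))"
  proof (intro sum_mono)
    fix j assume j: "j \<in> {0..n}"
    show "1 / real (dd n j) \<le> 1 / real (j + 1) + 1 / real (n + 1 - j)"
    proof (cases "j + 1 \<le> n + 1 - j")
      case True
      then have "dd n j = j + 1" by (simp add: dd_def)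
      then show ?thesis using j by simp
    next
      case False
      then have "dd n j = n + 1 - j" by (simp add: dd_def)
      then show ?thesis using j by simp
    qed
  qed
  also have "\<dots> = (\<Sum>j\<in>{0..n}. 1 / real (j + 1)) + (\<Sum>j\<in>{0..n}. 1 / real (n + 1 - j))"
    by (rule sum.distrib)
  also have "\<dots> = 2 * harm (n + 1)" unfolding sum_inv_rev sum_inv_harm by simp
  finally show ?thesis .
qed

lemma ln_ge1: "n \<ge> 3 \<Longrightarrow> 1 \<le> ln (real n)"
proof -
  assume n: "n \<ge> 3"
  have "exp 1 \<le> real n" using exp_le n by linarith
  then have "ln (exp 1) \<le> ln (real n)" using n by (subst ln_le_cancel_iff) auto
  then show ?thesis by simp
qed

lemma lnp1: "n \<ge> 3 \<Longrightarrow> ln (real n + 1) + 1 \<le> 3 * ln (real n)"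
proof -
  assume n: "n \<ge> 3"
  have "ln (real n + 1) \<le> ln (2 * real n)" using n by simp
  also have "\<dots> = ln 2 + ln (real n)" using n by (simp add: ln_mult)
  also have "ln 2 \<le> ln (real n)" using n by simp
  finally show ?thesis using ln_ge1[OF n] by linarith
qed

lemma harm_bound: "n \<ge> 3 \<Longrightarrow> harm (n + 1) \<le> 3 * ln (real n)"
  using harm_le_ln[of "n + 1"] lnp1[of n] by (simp add: add.commute)

lemma Bnd_bound:
  assumes n: "n \<ge> 3"
  shows "Bnd s n \<le> real n * exp 1 / csel s n * (6 * ln (real n))"
proof -
  have "Bnd s n \<le> Wt s n * (2 * harm (n + 1))"
    unfolding Bnd_def using Wt_nn sum_dd by (intro mult_left_mono) auto
  also have "\<dots> \<le> Wt s n * (6 * ln (real n))"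
    using Wt_nn harm_bound[OF n] by (intro mult_left_mono) auto
  finally show ?thesis by (simp add: Wt_def)
qed

lemma eventually_ge3: "\<forall>\<^sub>F n in sequentially. (n::nat) \<ge> 3"
  by (simp add: eventually_sequentially) (use le_refl in blast)

theorem theorem3:
  fixes score :: "nat \<Rightarrow> bool list set \<Rightarrow> bool list \<Rightarrow> ereal"
    and rk :: "nat \<Rightarrow> bool list set \<Rightarrow> bool list list"
  assumes div_fav: "\<forall>n\<ge>2. diversity_favouring n (OneMinMax n)
                      (cube n - {replicate n False, replicate n True}) (score n)"
    and ranking: "\<forall>n. is_score_ranking (score n) (rk n)"
  shows "(\<forall>m. \<forall>s \<in> {Exponential, PowerLaw, Tournament}. \<exists>C::real.
           \<forall>\<^sub>F n in sequentially.
             expected_time m s n (OneMinMax n) (rk n) \<le> ennreal (C * real n * ln (real n))) \<and>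
         (\<forall>m. \<exists>C::real.
           \<forall>\<^sub>F n in sequentially.
             expected_time m Harmonic n (OneMinMax n) (rk n) \<le> ennreal (C * real n * (ln (real n))^2))"
proof (intro conjI allI ballI)
  have ET: "expected_time m s n (OneMinMax n) (rk n) \<le> ennreal (Bnd s n)" if "n \<ge> 2" for m s n
    using expected_le[of n "score n" "rk n" m s] div_fav ranking that by simp
  fix m
  {
    fix s assume s: "s \<in> {Exponential, PowerLaw, Tournament}"
    define C where "C = exp 1 / csel s 0 * 6"
    have cs: "csel s n = csel s 0" for n using s by (auto simp: csel_def)
    show "\<exists>C::real. \<forall>\<^sub>F n in sequentially.
             expected_time m s n (OneMinMax n) (rk n) \<le> ennreal (C * real n * ln (real n))"
    proof (intro exI[of _ C] eventually_mono[OF eventually_ge3])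
      fix n :: nat assume n: "n \<ge> 3"
      have "Bnd s n \<le> C * real n * ln (real n)"
        using Bnd_bound[OF n, of s] unfolding cs[of n] by (simp add: C_def mult.commute mult.left_commute)
      then have "ennreal (Bnd s n) \<le> ennreal (C * real n * ln (real n))" by (rule ennreal_leI)
      moreover have "n \<ge> 2" using n by simp
      ultimately show "expected_time m s n (OneMinMax n) (rk n) \<le> ennreal (C * real n * ln (real n))"
        using ET[of n m s] by (meson order_trans)
    qed
  }
  define C where "C = exp 1 * (54::real)"
  have "\<forall>\<^sub>F n in sequentially.
           expected_time m Harmonic n (OneMinMax n) (rk n) \<le> ennreal (C * real n * (ln (real n))^2)"
  proof (rule eventually_mono[OF eventually_ge3])
    fix n :: nat assume n: "n \<ge> 3"
    have l0: "ln (real n) \<ge> 0" using ln_ge1[OF n] by simp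
    have "Bnd s n \<le> real n * exp 1 / csel s n * (6 * ln (real n))" if "s = Harmonic" for s
      using Bnd_bound[OF n] .
    then have "Bnd Harmonic n \<le> real n * exp 1 * (3 * (ln (real n + 1) + 1)) * (6 * ln (real n))"
      by (simp add: csel_def)
    also have "\<dots> \<le> real n * exp 1 * (3 * (3 * ln (real n))) * (6 * ln (real n))"
      using lnp1[OF n] l0 by (intro mult_right_mono mult_left_mono) auto
    also have "\<dots> = C * real n * (ln (real n))^2" by (simp add: C_def power2_eq_square)
    finally have "Bnd Harmonic n \<le> C * real n * (ln (real n))^2" .
    then have "ennreal (Bnd Harmonic n) \<le> ennreal (C * real n * (ln (real n))^2)" by (rule ennreal_leI)
    moreover have "n \<ge> 2" using n by simp
    ultimately show "expected_time m Harmonic n (OneMinMax n) (rk n) \<le> ennreal (C * real n * (ln (real n))^2)"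
      using ET[of n m Harmonic] by (meson order_trans)
  qed
  then show "\<exists>C::real. \<forall>\<^sub>F n in sequentially.
           expected_time m Harmonic n (OneMinMax n) (rk n) \<le> ennreal (C * real n * (ln (real n))^2)" by blast
qed


end
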